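(* Let $A,X\in M_n(\mathbb{C})$ and $1\le m\le n$. Then $$\|D^m\operatorname{per}A\|\le\frac{n!}{(n-m)!}\|A\|^{n-m}$$ and $$|\operatorname{per}(A+X)-\operatorname{per}A|\le(\|A\|+\|X\|)^n-\|A\|^n.$$
   Context: $\operatorname{per}A=\sum_{\sigma\in S_n}\prod_ia_{i\sigma(i)}$ is the permanent. $D^m\operatorname{per}(A)(X^1,\ldots,X^m)=\frac{\partial^m}{\partial t_1\cdots\partial t_m}\big|_{t=0}\operatorname{per}(A+t_1X^1+\cdots+t_mX^m)$, and $\|D^m\operatorname{per}A\|=\sup_{\|X^1\|=\cdots=\|X^m\|=1}|D^m\operatorname{per}(A)(X^1,\ldots,X^m)|$. $\|\cdot\|$ on matrices is the operator (spectral) norm. *)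

theory Defs
  imports "HOL-Analysis.Analysis"
begin

text \<open>Complex n x n matrices are rendered as complex^'n^'n (n = CARD('n)).\<close>

definition per :: "complex^'n^'n \<Rightarrow> complex" where
  "per A = (\<Sum>p | p permutes (UNIV::'n set). \<Prod>i\<in>UNIV. A $ i $ p i)"

text \<open>Operator (spectral) norm: induced by the Euclidean norm on complex^'n.\<close>
definition opnorm :: "complex^'n^'n \<Rightarrow> real" where
  "opnorm A = onorm (\<lambda>x::complex^'n. A *v x)"

definition cmat_scale :: "complex \<Rightarrow> complex^'n^'n \<Rightarrow> complex^'n^'n" where
  "cmat_scale c M = (\<chi> i j. c * M $ i $ j)"

fun mixed_partial :: "nat \<Rightarrow> ((nat \<Rightarrow> complex) \<Rightarrow> complex) \<Rightarrow> (nat \<Rightarrow> complex) \<Rightarrow> complex" where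
  "mixed_partial 0 g t = g t"
| "mixed_partial (Suc k) g t =
     deriv (\<lambda>s. mixed_partial k g (t(Suc k := s))) (t (Suc k))"

text \<open>D^m per(A)(X^1,...,X^m) = d^m/(dt_1...dt_m) at t=0 of per(A + t_1 X^1 + ... + t_m X^m).\<close>
definition Dper :: "nat \<Rightarrow> complex^'n^'n \<Rightarrow> (nat \<Rightarrow> complex^'n^'n) \<Rightarrow> complex" where
  "Dper m A X = mixed_partial m
      (\<lambda>t. per (A + (\<Sum>k\<in>{1..m}. cmat_scale (t k) (X k)))) (\<lambda>_. 0)"

definition Dper_norm :: "nat \<Rightarrow> complex^'n^'n \<Rightarrow> real" where
  "Dper_norm m A = Sup {norm (Dper m A X) | X. \<forall>k\<in>{1..m}. opnorm (X k) = 1}"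

end

theory Submission
  imports Defs
begin

definition KK :: "('n::finite \<Rightarrow> complex^'n^'n) \<Rightarrow> (('n\<Rightarrow>'n) \<Rightarrow> complex) \<Rightarrow> ('n\<Rightarrow>'n) \<Rightarrow> complex" where
  "KK h w f = (\<Sum>g\<in>UNIV. (\<Prod>l\<in>UNIV. h l $ f l $ g l) * w g)"

definition nsq :: "(('n::finite\<Rightarrow>'n) \<Rightarrow> complex) \<Rightarrow> real" where
  "nsq w = (\<Sum>f\<in>UNIV. (cmod (w f))^2)"

lemma prod_sum_fun:
  fixes F :: "'a::finite \<Rightarrow> 'b::finite \<Rightarrow> 'c::comm_semiring_1"
  shows "(\<Prod>l\<in>UNIV. \<Sum>j\<in>UNIV. F l j) = (\<Sum>g\<in>UNIV. \<Prod>l\<in>UNIV. F l (g l))"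
  using prod_sum_PiE[of "UNIV::'a set" "\<lambda>_. UNIV::'b set" F] by simp

lemma KK_comp: "KK h (KK h' w) = KK (\<lambda>l. h l ** h' l) w"
proof (rule ext)
  fix f
  have "KK h (KK h' w) f = (\<Sum>g\<in>UNIV. \<Sum>g'\<in>UNIV. (\<Prod>l\<in>UNIV. h l $ f l $ g l) * (\<Prod>l\<in>UNIV. h' l $ g l $ g' l) * w g')"
    unfolding KK_def by (simp add: sum_distrib_left mult.assoc)
  also have "\<dots> = (\<Sum>g'\<in>UNIV. \<Sum>g\<in>UNIV. (\<Prod>l\<in>UNIV. h l $ f l $ g l * h' l $ g l $ g' l) * w g')"
    by (subst sum.swap) (simp add: prod.distrib)
  also have "\<dots> = (\<Sum>g'\<in>UNIV. (\<Prod>l\<in>UNIV. \<Sum>j\<in>UNIV. h l $ f l $ j * h' l $ j $ g' l) * w g')"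
    by (simp add: prod_sum_fun sum_distrib_right)
  also have "\<dots> = KK (\<lambda>l. h l ** h' l) w f"
    unfolding KK_def by (simp add: matrix_matrix_mult_def)
  finally show "KK h (KK h' w) f = KK (\<lambda>l. h l ** h' l) w f" .
qed

lemma KK_id: "KK (\<lambda>l. mat 1) w = w"
proof (rule ext)
  fix f :: "'a \<Rightarrow> 'a"
  have p: "(\<Prod>l\<in>UNIV. (mat 1 :: complex^'a^'a) $ f l $ g l) = (if g = f then 1 else 0)" for g
  proof (cases "g = f")
    case False
    then obtain l where "g l \<noteq> f l" by auto
    then have "(\<Prod>l\<in>UNIV. (mat 1 :: complex^'a^'a) $ f l $ g l) = 0"
      by (intro prod_zero) (auto simp: mat_def intro!: exI[of _ l])
    then show ?thesis using False by simp
  qed (simp add: mat_def)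
  show "KK (\<lambda>l. mat 1) w f = w f" unfolding KK_def p by (simp add: if_distrib[of "\<lambda>x. x * _"] cong: if_cong)
qed

lemma KK_single: "KK (\<lambda>l. if l = a then H else mat 1) w f = (\<Sum>j\<in>UNIV. H $ f a $ j * w (f(a:=j)))"
proof -
  have p: "(\<Prod>l\<in>UNIV. (if l = a then H else mat 1) $ f l $ g l) =
     (if g \<in> range (\<lambda>j. f(a:=j)) then H $ f a $ g a else 0)" for g
  proof (cases "g \<in> range (\<lambda>j. f(a:=j))")
    case True
    then obtain j where g: "g = f(a:=j)" by auto
    have "(\<Prod>l\<in>UNIV. (if l = a then H else mat 1) $ f l $ g l) =
       (if a = a then H else mat 1) $ f a $ g a * (\<Prod>l\<in>UNIV-{a}. (if l = a then H else mat 1) $ f l $ g l)"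
      by (subst prod.remove[of _ a]) auto
    also have "(\<Prod>l\<in>UNIV-{a}. (if l = a then H else mat 1) $ f l $ g l) = 1"
      by (intro prod.neutral) (auto simp: g mat_def)
    finally show ?thesis using True by simp
  next
    case False
    have "\<exists>l. l \<noteq> a \<and> g l \<noteq> f l"
    proof (rule ccontr)
      assume "\<not> ?thesis"
      then have "g = f(a:= g a)" by (auto simp: fun_eq_iff)
      with False show False by auto
    qed
    then obtain l where l: "l \<noteq> a" "g l \<noteq> f l" by blast
    have "(\<Prod>l\<in>UNIV. (if l = a then H else mat 1) $ f l $ g l) = 0"
      by (rule prod_zero) (use l in \<open>auto simp: mat_def intro!: bexI[of _ l]\<close>)
    then show ?thesis using False by simp
  qed
  have "KK (\<lambda>l. if l = a then H else mat 1) w f = (\<Sum>g\<in>UNIV. (if g \<in> range (\<lambda>j. f(a:=j)) then H $ f a $ g a * w g else 0))"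
    unfolding KK_def p by (intro sum.cong) auto
  also have "\<dots> = (\<Sum>g\<in>range (\<lambda>j. f(a:=j)). H $ f a $ g a * w g)"
    by (subst sum.inter_filter[symmetric]) (auto intro: sum.cong)
  also have "\<dots> = (\<Sum>j\<in>UNIV. H $ f a $ j * w (f(a:=j)))"
    by (subst sum.reindex) (auto simp: inj_on_def fun_eq_iff split: if_splits)
  finally show ?thesis .
qed

lemma sum_split_slot:
  fixes F :: "('a::finite \<Rightarrow> 'b::finite) \<Rightarrow> 'c::comm_monoid_add"
  shows "(\<Sum>f\<in>UNIV. F f) = (\<Sum>f\<in>{f. f a = c}. \<Sum>i\<in>UNIV. F (f(a:=i)))"
proof -
  have b: "bij_betw (\<lambda>(f,i). f(a:=i)) ({f. f a = c} \<times> UNIV) UNIV"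
  proof (rule bij_betwI')
    fix x y assume "x \<in> {f. f a = c} \<times> (UNIV::'b set)" "y \<in> {f. f a = c} \<times> (UNIV::'b set)"
    then show "((\<lambda>(f,i). f(a:=i)) x = (\<lambda>(f,i). f(a:=i)) y) = (x = y)"
    proof (cases x; cases y)
      fix f i g j assume xy: "x = (f,i)" "y = (g,j)"
      assume "x \<in> {f. f a = c} \<times> (UNIV::'b set)" "y \<in> {f. f a = c} \<times> (UNIV::'b set)"
      then have fa: "f a = c" "g a = c" using xy by auto
      show ?thesis
      proof
        assume eq: "(\<lambda>(f,i). f(a:=i)) x = (\<lambda>(f,i). f(a:=i)) y"
        then have e: "f(a:=i) = g(a:=j)" using xy by simp
        have "i = j" using fun_cong[OF e, of a] by simp
        moreover have "f = g"
        proof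
          fix z show "f z = g z" using fun_cong[OF e, of z] fa by (cases "z = a") auto
        qed
        ultimately show "x = y" using xy by simp
      qed simp
    qed
  next
    fix y :: "'a \<Rightarrow> 'b" show "\<exists>x\<in>{f. f a = c} \<times> UNIV. y = (\<lambda>(f,i). f(a:=i)) x"
      by (intro bexI[of _ "(y(a:=c), y a)"]) auto
  qed auto
  have "(\<Sum>f\<in>UNIV. F f) = (\<Sum>x\<in>{f. f a = c} \<times> UNIV. F ((\<lambda>(f,i). f(a:=i)) x))"
    using sum.reindex_bij_betw[OF b, of F] by simp
  also have "\<dots> = (\<Sum>f\<in>{f. f a = c}. \<Sum>i\<in>UNIV. F (f(a:=i)))"
    unfolding sum.cartesian_product by (intro sum.cong) auto
  finally show ?thesis .
qed

lemma norm_vec_sq: "(norm (v::complex^'n))^2 = (\<Sum>i\<in>UNIV. (cmod (v$i))^2)"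
  unfolding norm_vec_def L2_set_def by (simp add: sum_nonneg)

lemma opnorm_mv: "norm (H *v v) \<le> opnorm H * norm v"
  unfolding opnorm_def by (rule onorm) (rule matrix_vector_mul_bounded_linear)

lemma opnorm_nonneg: "0 \<le> opnorm H"
  unfolding opnorm_def by (rule onorm_pos_le) (rule matrix_vector_mul_bounded_linear)

lemma KK_single_bound:
  "nsq (KK (\<lambda>l. if l = a then H else mat 1) w) \<le> (opnorm H)^2 * nsq w"
proof -
  define v where "v f = (\<chi> j. w (f(a:=j)))" for f
  have e: "KK (\<lambda>l. if l = a then H else mat 1) w (f(a:=i)) = (H *v v f) $ i" for f i
    unfolding KK_single by (simp add: v_def matrix_vector_mult_def)
  have "nsq (KK (\<lambda>l. if l = a then H else mat 1) w) = (\<Sum>f\<in>{f. f a = a}. (norm (H *v v f))^2)"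
    unfolding nsq_def by (subst sum_split_slot[of _ a a]) (simp add: e norm_vec_sq)
  also have "\<dots> \<le> (\<Sum>f\<in>{f. f a = a}. (opnorm H)^2 * (norm (v f))^2)"
    by (intro sum_mono) (metis opnorm_mv norm_ge_zero power_mono power_mult_distrib)
  also have "\<dots> = (opnorm H)^2 * nsq w"
    unfolding nsq_def by (subst sum_split_slot[of _ a a]) (simp add: norm_vec_sq v_def sum_distrib_left)
  finally show ?thesis .
qed

lemma KK_bound_set:
  assumes "finite L"
  shows "nsq (KK (\<lambda>l. if l \<in> L then h l else mat 1) w) \<le> (\<Prod>l\<in>L. opnorm (h l))^2 * nsq w"
  using assms
proof (induction L rule: finite_induct)
  case empty
  then show ?case by (simp add: KK_id)
next
  case (insert a L)
  have e: "(\<lambda>l. if l \<in> insert a L then h l else mat 1) =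
     (\<lambda>l. (if l = a then h a else mat 1) ** (if l \<in> L then h l else mat 1))"
    using insert.hyps by (auto simp: fun_eq_iff matrix_mul_lid matrix_mul_rid)
  have "nsq (KK (\<lambda>l. if l \<in> insert a L then h l else mat 1) w) =
     nsq (KK (\<lambda>l. if l = a then h a else mat 1) (KK (\<lambda>l. if l \<in> L then h l else mat 1) w))"
    unfolding e KK_comp ..
  also have "\<dots> \<le> (opnorm (h a))^2 * nsq (KK (\<lambda>l. if l \<in> L then h l else mat 1) w)"
    by (rule KK_single_bound)
  also have "\<dots> \<le> (opnorm (h a))^2 * ((\<Prod>l\<in>L. opnorm (h l))^2 * nsq w)"
    by (intro mult_left_mono insert.IH) simp
  also have "\<dots> = (\<Prod>l\<in>insert a L. opnorm (h l))^2 * nsq w"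
    using insert.hyps by (simp add: power_mult_distrib)
  finally show ?case .
qed

lemma KK_bound: "nsq (KK h w) \<le> (\<Prod>l\<in>UNIV. opnorm (h l))^2 * nsq w"
  using KK_bound_set[of "UNIV" h w] by simp

definition Tm :: "('n::finite \<Rightarrow> complex^'n^'n) \<Rightarrow> complex" where
  "Tm h = (\<Sum>\<sigma>\<in>{p. p permutes (UNIV::'n set)}. \<Sum>\<pi>\<in>{p. p permutes (UNIV::'n set)}. \<Prod>l\<in>UNIV. h l $ \<sigma> l $ \<pi> l)"

lemma nsq_nonneg: "0 \<le> nsq w"
  unfolding nsq_def by (simp add: sum_nonneg)

lemma Tm_bound: "cmod (Tm (h::'n::finite \<Rightarrow> complex^'n^'n)) \<le> fact CARD('n) * (\<Prod>l\<in>UNIV. opnorm (h l))"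
proof -
  define P where "P = {p. p permutes (UNIV::'n set)}"
  define u where "u f = (if f \<in> P then 1 else (0::complex))" for f :: "'n \<Rightarrow> 'n"
  have KKu: "KK h u f = (\<Sum>g\<in>P. \<Prod>l\<in>UNIV. h l $ f l $ g l)" for f
    unfolding KK_def u_def by (simp add: sum.inter_filter[symmetric] if_distrib[of "\<lambda>x. _ * x"] cong: if_cong)
  have T: "Tm h = (\<Sum>f\<in>UNIV. u f * KK h u f)"
    unfolding Tm_def KKu u_def P_def[symmetric]
    by (simp add: sum.inter_filter[symmetric] if_distrib[of "\<lambda>x. x * _"] cong: if_cong)
  have nu: "nsq u = fact CARD('n)"
  proof -
    have "nsq u = (\<Sum>f\<in>UNIV. if f \<in> P then 1 else 0)"
      unfolding nsq_def u_def by (intro sum.cong) auto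
    also have "\<dots> = card P" by (simp add: sum.If_cases)
    also have "\<dots> = fact CARD('n)" unfolding P_def using card_permutations[of "UNIV::'n set" "CARD('n)"] by simp
    finally show ?thesis .
  qed
  have L2: "L2_set (\<lambda>f. cmod (w f)) UNIV = sqrt (nsq w)" for w :: "('n\<Rightarrow>'n) \<Rightarrow> complex"
    unfolding L2_set_def nsq_def ..
  have "cmod (Tm h) \<le> (\<Sum>f\<in>UNIV. \<bar>cmod (u f)\<bar> * \<bar>cmod (KK h u f)\<bar>)"
    unfolding T by (rule order_trans[OF norm_sum]) (simp add: norm_mult)
  also have "\<dots> \<le> sqrt (nsq u) * sqrt (nsq (KK h u))"
    using L2_set_mult_ineq[of "\<lambda>f. cmod (u f)" "\<lambda>f. cmod (KK h u f)" UNIV] by (simp add: L2)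
  also have "\<dots> \<le> sqrt (nsq u) * sqrt ((\<Prod>l\<in>UNIV. opnorm (h l))^2 * nsq u)"
    by (intro mult_left_mono real_sqrt_le_mono KK_bound) (simp add: nsq_nonneg)
  also have "\<dots> = nsq u * (\<Prod>l\<in>UNIV. opnorm (h l))"
    by (simp add: real_sqrt_mult prod_nonneg opnorm_nonneg nsq_nonneg)
  finally show ?thesis by (simp add: nu)
qed

lemma Tm_perm:
  assumes "\<rho> permutes (UNIV::'n::finite set)"
  shows "Tm (\<lambda>l. h (\<rho> l)) = Tm (h :: 'n \<Rightarrow> complex^'n^'n)"
proof -
  have ir: "inv \<rho> permutes UNIV" using assms by (rule permutes_inv)
  have "Tm h = (\<Sum>\<sigma>\<in>{p. p permutes (UNIV::'n set)}. \<Sum>\<pi>\<in>{p. p permutes (UNIV::'n set)}.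
          \<Prod>l\<in>UNIV. h (\<rho> l) $ \<sigma> (\<rho> l) $ \<pi> (\<rho> l))"
    unfolding Tm_def by (subst prod.permute[OF assms]) (simp add: o_def)
  also have "\<dots> = (\<Sum>\<sigma>\<in>{p. p permutes (UNIV::'n set)}. \<Sum>\<pi>\<in>{p. p permutes (UNIV::'n set)}.
          \<Prod>l\<in>UNIV. h (\<rho> l) $ (\<sigma> \<circ> inv \<rho>) (\<rho> l) $ (\<pi> \<circ> inv \<rho>) (\<rho> l))"
    by (subst sum_permutations_compose_right[OF ir]) (subst sum_permutations_compose_right[OF ir], simp)
  also have "\<dots> = Tm (\<lambda>l. h (\<rho> l))"
    unfolding Tm_def using permutes_inverses(2)[OF assms] by simp
  finally show ?thesis ..
qed

lemma Tm_const: "Tm (\<lambda>_. B) = fact CARD('n) * per (B :: complex^'n::finite^'n)"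
proof -
  have e: "(\<Sum>\<pi>\<in>{p. p permutes (UNIV::'n set)}. \<Prod>l\<in>UNIV. B $ \<sigma> l $ \<pi> l) = per B"
    if s: "\<sigma> permutes UNIV" for \<sigma>
  proof -
    have is': "inv \<sigma> permutes UNIV" using s by (rule permutes_inv)
    have "(\<Sum>\<pi>\<in>{p. p permutes (UNIV::'n set)}. \<Prod>l\<in>UNIV. B $ \<sigma> l $ \<pi> l) =
       (\<Sum>\<pi>\<in>{p. p permutes (UNIV::'n set)}. \<Prod>l\<in>UNIV. B $ \<sigma> (inv \<sigma> l) $ \<pi> (inv \<sigma> l))"
      by (subst prod.permute[OF is']) (simp add: o_def)
    also have "\<dots> = (\<Sum>\<pi>\<in>{p. p permutes (UNIV::'n set)}. \<Prod>l\<in>UNIV. B $ l $ (\<pi> \<circ> inv \<sigma>) l)"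
      using permutes_inverses(1)[OF s] by simp
    also have "\<dots> = per B"
      unfolding per_def by (rule sum_permutations_compose_right[OF is', symmetric])
    finally show ?thesis .
  qed
  have "Tm (\<lambda>_. B) = (\<Sum>\<sigma>\<in>{p. p permutes (UNIV::'n set)}. per B)"
    unfolding Tm_def by (intro sum.cong refl e) simp
  also have "\<dots> = fact CARD('n) * per B"
    using card_permutations[of "UNIV::'n set" "CARD('n)"] by simp
  finally show ?thesis .
qed

lemma Tm_deriv:
  assumes H: "\<And>s l. H s l = P l + cmat_scale s (Q l)"
  shows "((\<lambda>s. Tm (H s :: 'n::finite \<Rightarrow> complex^'n^'n)) has_field_derivative
           (\<Sum>l\<in>UNIV. Tm ((H s0)(l := Q l)))) (at s0)"
proof -
  define Pm where "Pm = {p. p permutes (UNIV::'n set)}"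
  have fd: "((\<lambda>s. H s l $ a $ b) has_field_derivative Q l $ a $ b) (at x)" for l a b x
  proof -
    have "(\<lambda>s. H s l $ a $ b) = (\<lambda>s. P l $ a $ b + s * Q l $ a $ b)"
      by (simp add: H cmat_scale_def)
    then show ?thesis by (auto intro!: derivative_eq_intros)
  qed
  have d: "((\<lambda>s. Tm (H s)) has_field_derivative
     (\<Sum>\<sigma>\<in>Pm. \<Sum>\<pi>\<in>Pm. \<Sum>l\<in>UNIV. Q l $ \<sigma> l $ \<pi> l * (\<Prod>k\<in>UNIV-{l}. H s0 k $ \<sigma> k $ \<pi> k))) (at s0)"
    unfolding Tm_def Pm_def[symmetric]
    by (intro DERIV_sum has_field_derivative_prod fd)
  have "(\<Sum>\<sigma>\<in>Pm. \<Sum>\<pi>\<in>Pm. \<Sum>l\<in>UNIV. Q l $ \<sigma> l $ \<pi> l * (\<Prod>k\<in>UNIV-{l}. H s0 k $ \<sigma> k $ \<pi> k))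
     = (\<Sum>\<sigma>\<in>Pm. \<Sum>\<pi>\<in>Pm. \<Sum>l\<in>UNIV. \<Prod>k\<in>UNIV. ((H s0)(l := Q l)) k $ \<sigma> k $ \<pi> k)"
  proof (intro sum.cong refl)
    fix \<sigma> \<pi> :: "'n \<Rightarrow> 'n" and l :: 'n
    have "(\<Prod>k\<in>UNIV. ((H s0)(l := Q l)) k $ \<sigma> k $ \<pi> k) =
        ((H s0)(l := Q l)) l $ \<sigma> l $ \<pi> l * (\<Prod>k\<in>UNIV-{l}. ((H s0)(l := Q l)) k $ \<sigma> k $ \<pi> k)"
      by (subst prod.remove[of _ l]) auto
    also have "(\<Prod>k\<in>UNIV-{l}. ((H s0)(l := Q l)) k $ \<sigma> k $ \<pi> k) = (\<Prod>k\<in>UNIV-{l}. H s0 k $ \<sigma> k $ \<pi> k)"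
      by (intro prod.cong) auto
    finally show "Q l $ \<sigma> l $ \<pi> l * (\<Prod>k\<in>UNIV-{l}. H s0 k $ \<sigma> k $ \<pi> k) =
        (\<Prod>k\<in>UNIV. ((H s0)(l := Q l)) k $ \<sigma> k $ \<pi> k)" by simp
  qed
  also have "\<dots> = (\<Sum>l\<in>UNIV. Tm ((H s0)(l := Q l)))"
    unfolding Tm_def Pm_def[symmetric]
    by (simp add: sum.swap[of _ UNIV] sum.swap[of _ UNIV Pm])
  finally show ?thesis using d by simp
qed

lemma prod_if_set:
  "(\<Prod>l\<in>(UNIV::'a::finite set). if l \<in> U then a l else b l) = (\<Prod>l\<in>U. a l) * (\<Prod>l\<in>UNIV-U. (b l :: 'c::comm_monoid_mult))"
  by (subst prod.If_cases) (auto simp: Diff_eq Int_commute)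

lemma Tm_split: "Tm (\<lambda>_. A + X) = (\<Sum>U\<in>Pow UNIV. Tm (\<lambda>l. if l \<in> U then X else (A::complex^'n::finite^'n)))"
proof -
  have "Tm (\<lambda>_. A + X) = (\<Sum>\<sigma>\<in>{p. p permutes (UNIV::'n set)}. \<Sum>\<pi>\<in>{p. p permutes (UNIV::'n set)}.
     \<Sum>U\<in>Pow UNIV. (\<Prod>l\<in>U. X $ \<sigma> l $ \<pi> l) * (\<Prod>l\<in>UNIV-U. A $ \<sigma> l $ \<pi> l))"
    unfolding Tm_def by (intro sum.cong refl, subst prod_add[symmetric]) (simp_all add: add.commute)
  also have "\<dots> = (\<Sum>U\<in>Pow UNIV. Tm (\<lambda>l. if l \<in> U then X else A))"
    unfolding Tm_def
    by (subst sum.swap, subst (2) sum.swap) (simp add: if_distrib[of "\<lambda>M. M $ _ $ _"] prod_if_set cong: if_cong)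
  finally show ?thesis .
qed

lemma part2:
  "norm (per (A + X) - per A) \<le> (opnorm A + opnorm X) ^ CARD('n) - opnorm A ^ CARD('n)"
  for A X :: "complex^'n::finite^'n"
proof -
  define Q where "Q = Pow (UNIV::'n set) - {{}}"
  define hU where "hU U = (\<lambda>l. if l \<in> U then X else A)" for U :: "'n set"
  have fin: "finite (Pow (UNIV::'n set))" by simp
  have "Tm (\<lambda>_. A + X) = Tm (hU {}) + (\<Sum>U\<in>Q. Tm (hU U))"
    unfolding Tm_split Q_def hU_def by (subst sum.remove[OF fin, of "{}"]) auto
  then have e: "fact CARD('n) * (per (A + X) - per A) = (\<Sum>U\<in>Q. Tm (hU U))"
    by (simp add: Tm_const hU_def right_diff_distrib)
  have "fact CARD('n) * norm (per (A + X) - per A) \<le> (\<Sum>U\<in>Q. cmod (Tm (hU U)))"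
  proof -
    have "fact CARD('n) * norm (per (A + X) - per A) = norm (fact CARD('n) * (per (A + X) - per A))"
      by (simp add: norm_mult)
    then show ?thesis using norm_sum[of "\<lambda>U. Tm (hU U)" Q] e by simp
  qed
  also have "\<dots> \<le> (\<Sum>U\<in>Q. fact CARD('n) * ((\<Prod>l\<in>U. opnorm X) * (\<Prod>l\<in>UNIV-U. opnorm A)))"
  proof (intro sum_mono)
    fix U
    have "(\<Prod>l\<in>UNIV. opnorm (hU U l)) = (\<Prod>l\<in>UNIV. if l \<in> U then opnorm X else opnorm A)"
      unfolding hU_def by (intro prod.cong) auto
    then show "cmod (Tm (hU U)) \<le> fact CARD('n) * ((\<Prod>l\<in>U. opnorm X) * (\<Prod>l\<in>UNIV-U. opnorm A))"
      using Tm_bound[of "hU U"] by (simp add: prod_if_set)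
  qed
  also have "\<dots> = fact CARD('n) * ((opnorm A + opnorm X) ^ CARD('n) - opnorm A ^ CARD('n))"
  proof -
    have "(opnorm A + opnorm X) ^ CARD('n) = (\<Prod>l\<in>(UNIV::'n set). opnorm X + opnorm A)"
      by (simp add: add.commute)
    also have "\<dots> = (\<Sum>U\<in>Pow (UNIV::'n set). (\<Prod>l\<in>U. opnorm X) * (\<Prod>l\<in>UNIV-U. opnorm A))"
      using prod_add[of "UNIV::'n set" "\<lambda>_. opnorm X" "\<lambda>_. opnorm A"] by simp
    also have "\<dots> = opnorm A ^ CARD('n) + (\<Sum>U\<in>Q. (\<Prod>l\<in>U. opnorm X) * (\<Prod>l\<in>UNIV-U. opnorm A))"
      unfolding Q_def by (subst sum.remove[OF fin, of "{}"]) auto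
    finally show ?thesis by (simp add: sum_distrib_left)
  qed
  finally show ?thesis by simp
qed

lemma cmat_scale_0 [simp]: "cmat_scale 0 M = 0" "cmat_scale s 0 = 0"
  by (simp_all add: cmat_scale_def vec_eq_iff)

lemma B_upd:
  fixes m :: nat
  assumes "j \<in> {1..m}"
  shows "A + (\<Sum>k\<in>{1..m}. cmat_scale ((t(j:=s)) k) (X k)) =
     (A + (\<Sum>k\<in>{1..m}. cmat_scale ((t(j:=0)) k) (X k))) + cmat_scale s (X j)"
proof -
  have "(\<Sum>k\<in>{1..m}. cmat_scale ((t(j:=s)) k) (X k)) = cmat_scale s (X j) + (\<Sum>k\<in>{1..m}-{j}. cmat_scale (t k) (X k))"
    using assms by (subst sum.remove[of _ j]) (auto intro!: sum.cong)
  moreover have "(\<Sum>k\<in>{1..m}. cmat_scale ((t(j:=0)) k) (X k)) = (\<Sum>k\<in>{1..m}-{j}. cmat_scale (t k) (X k))"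
    using assms by (subst sum.remove[of _ j]) (auto intro!: sum.cong)
  ultimately show ?thesis by (simp add: algebra_simps)
qed

lemma Tm_zero_slot: "h l = 0 \<Longrightarrow> Tm h = 0"
  unfolding Tm_def by (intro sum.neutral ballI prod_zero) (auto intro!: exI[of _ l])

lemma mp_formula:
  fixes A :: "complex^'n::finite^'n" and X :: "nat \<Rightarrow> complex^'n^'n" and b :: "nat \<Rightarrow> 'n"
  assumes bb: "bij_betw b {0..<CARD('n)} UNIV" and mn: "m \<le> CARD('n)"
  defines "c \<equiv> inv_into {0..<CARD('n)} b"
  defines "B \<equiv> \<lambda>t. A + (\<Sum>k\<in>{1..m}. cmat_scale (t k) (X k))"
  defines "hk \<equiv> \<lambda>k t l. if c l < k then X (c l + 1) else B t"
  shows "k \<le> m \<Longrightarrow> mixed_partial k (\<lambda>t. per (B t)) t = Tm (hk k t) / fact (CARD('n) - k)"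
proof (induction k arbitrary: t)
  case 0
  have "hk 0 t = (\<lambda>_. B t)" unfolding hk_def by auto
  then show ?case by (simp add: Tm_const)
next
  case (Suc k)
  define n where "n = CARD('n)"
  have km: "k < m" "Suc k \<le> m" "k < n" using Suc.prems mn n_def by auto
  have cl: "c l < n" for l
    using bij_betw_inv_into[OF bb] unfolding c_def n_def bij_betw_def by auto
  have bc: "b (c l) = l" for l
    unfolding c_def using bij_betw_inv_into_right[OF bb] by simp
  have cb: "c (b j) = j" if "j < n" for j
    unfolding c_def using bij_betw_inv_into_left[OF bb] that n_def by simp
  have card: "card {l. k \<le> c l} = n - k"
  proof -
    have "{l. k \<le> c l} = b ` {k..<n}"
    proof
      show "{l. k \<le> c l} \<subseteq> b ` {k..<n}"
      proof
        fix l assume "l \<in> {l. k \<le> c l}"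
        then show "l \<in> b ` {k..<n}" using cl[of l] bc[of l] by (intro image_eqI[of _ _ "c l"]) auto
      qed
      show "b ` {k..<n} \<subseteq> {l. k \<le> c l}" using cb by auto
    qed
    moreover have "inj_on b {k..<n}"
      using bb unfolding bij_betw_def n_def by (rule inj_on_subset[OF conjunct1]) auto
    ultimately show ?thesis by (simp add: card_image)
  qed
  define P where "P l = (if c l < k then X (c l + 1) else B (t(Suc k := 0)))" for l
  define Q where "Q l = (if c l < k then 0 else X (Suc k))" for l
  define H where "H s = hk k (t(Suc k := s))" for s
  have HPQ: "H s l = P l + cmat_scale s (Q l)" for s l
    unfolding H_def hk_def P_def Q_def B_def using B_upd[of "Suc k" m A t s X] km by auto
  have D: "((\<lambda>s. Tm (H s)) has_field_derivative (\<Sum>l\<in>UNIV. Tm ((H (t (Suc k)))(l := Q l)))) (at (t (Suc k)))"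
    by (rule Tm_deriv[OF HPQ])
  have H0: "H (t (Suc k)) = hk k t" unfolding H_def by simp
  have terms: "Tm ((hk k t)(l := Q l)) = (if k \<le> c l then Tm (hk (Suc k) t) else 0)" for l
  proof (cases "k \<le> c l")
    case False
    then show ?thesis using Tm_zero_slot[of "(hk k t)(l := Q l)" l] by (simp add: Q_def)
  next
    case True
    define \<rho> where "\<rho> = Transposition.transpose l (b k)"
    have rp: "\<rho> permutes UNIV" unfolding \<rho>_def by (rule permutes_swap_id) auto
    have "(\<lambda>x. ((hk k t)(l := Q l)) (\<rho> x)) = hk (Suc k) t"
    proof
      fix x
      have ck: "c (b k) = k" using cb km by simp
      show "((hk k t)(l := Q l)) (\<rho> x) = hk (Suc k) t x"
      proof (cases "x = b k")
        case True
        then show ?thesis using ck True \<open>k \<le> c l\<close> by (auto simp: \<rho>_def hk_def Q_def)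
      next
        case xb: False
        show ?thesis
        proof (cases "x = l")
          case True
          then have "c l \<noteq> k" using xb bc by metis
          then show ?thesis using True xb ck \<open>k \<le> c l\<close> by (auto simp: \<rho>_def hk_def Q_def)
        next
          case False
          have "c x \<noteq> k" using xb bc by metis
          then show ?thesis using False xb by (auto simp: \<rho>_def hk_def Q_def)
        qed
      qed
    qed
    then have "Tm (hk (Suc k) t) = Tm ((hk k t)(l := Q l))"
      using Tm_perm[OF rp, of "(hk k t)(l := Q l)"] by simp
    then show ?thesis using True by simp
  qed
  have sumeq: "(\<Sum>l\<in>UNIV. Tm ((hk k t)(l := Q l))) = of_nat (n - k) * Tm (hk (Suc k) t)"
    unfolding terms by (simp add: sum.If_cases card Int_def)
  have D2: "((\<lambda>s. Tm (H s) / fact (n - k)) has_field_derivative (of_nat (n - k) * Tm (hk (Suc k) t)) / fact (n - k)) (at (t (Suc k)))"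
    using DERIV_cdivide[OF D, of "fact (n - k)"] unfolding H0 sumeq .
  have "mixed_partial (Suc k) (\<lambda>t. per (B t)) t = deriv (\<lambda>s. Tm (H s) / fact (n - k)) (t (Suc k))"
    using Suc.IH km unfolding H_def n_def by simp
  also have "\<dots> = (of_nat (n - k) * Tm (hk (Suc k) t)) / fact (n - k)"
    by (rule DERIV_imp_deriv[OF D2])
  also have "\<dots> = Tm (hk (Suc k) t) / fact (n - Suc k)"
  proof -
    have "n - k = Suc (n - Suc k)" using km by simp
    then show ?thesis by (simp add: fact_Suc)
  qed
  finally show ?case unfolding n_def .
qed

lemma card_ge:
  assumes bb: "bij_betw b {0..<CARD('n::finite)} (UNIV::'n set)" and kn: "k \<le> CARD('n)"
  shows "card {l. k \<le> inv_into {0..<CARD('n)} b l} = CARD('n) - k"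
proof -
  define n where "n = CARD('n)"
  define c where "c = inv_into {0..<CARD('n)} b"
  have cl: "c l < n" for l
    using bij_betw_inv_into[OF bb] unfolding c_def n_def bij_betw_def by auto
  have bc: "b (c l) = l" for l
    unfolding c_def using bij_betw_inv_into_right[OF bb] by simp
  have cb: "c (b j) = j" if "j < n" for j
    unfolding c_def using bij_betw_inv_into_left[OF bb] that n_def by simp
  have "{l. k \<le> c l} = b ` {k..<n}"
  proof
    show "{l. k \<le> c l} \<subseteq> b ` {k..<n}"
    proof
      fix l assume "l \<in> {l. k \<le> c l}"
      then show "l \<in> b ` {k..<n}" using cl[of l] bc[of l] by (intro image_eqI[of _ _ "c l"]) auto
    qed
    show "b ` {k..<n} \<subseteq> {l. k \<le> c l}" using cb by auto
  qed
  moreover have "inj_on b {k..<n}"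
    using bb unfolding bij_betw_def n_def by (rule inj_on_subset[OF conjunct1]) auto
  ultimately show ?thesis by (simp add: card_image c_def n_def)
qed

lemma opnorm_one: "opnorm (mat 1 :: complex^'n::finite^'n) = 1"
proof -
  have "((*v) (mat 1 :: complex^'n^'n)) = (\<lambda>x. x)"
    by (rule ext) (simp add: matrix_vector_mul_lid)
  then show ?thesis unfolding opnorm_def using onorm_id by metis
qed

lemma part1:
  fixes A :: "complex^'n::finite^'n" and m :: nat
  assumes "1 \<le> m" and mn: "m \<le> CARD('n)"
  shows "Dper_norm m A \<le> fact CARD('n) / fact (CARD('n) - m) * opnorm A ^ (CARD('n) - m)"
proof -
  define n where "n = CARD('n)"
  obtain b where bb: "bij_betw b {0..<CARD('n)} (UNIV::'n set)"
    using ex_bij_betw_nat_finite[of "UNIV::'n set"] by auto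
  define c where "c = inv_into {0..<CARD('n)} b"
  have cl: "c l < n" for l
    using bij_betw_inv_into[OF bb] unfolding c_def n_def bij_betw_def by auto
  have bound: "norm (Dper m A Xf) \<le> fact n / fact (n - m) * opnorm A ^ (n - m)"
    if Xf: "\<forall>k\<in>{1..m}. opnorm (Xf k) = 1" for Xf
  proof -
    define B where "B = (\<lambda>t. A + (\<Sum>k\<in>{1..m}. cmat_scale (t k) (Xf k)))"
    define h where "h = (\<lambda>l. if c l < m then Xf (c l + 1) else B (\<lambda>_. 0))"
    have "Dper m A Xf = Tm h / fact (n - m)"
      using mp_formula[OF bb mn, of m A Xf "\<lambda>_. 0"]
      unfolding Dper_def h_def c_def n_def B_def by simp
    moreover have "B (\<lambda>_. 0) = A" unfolding B_def by simp
    moreover have "(\<Prod>l\<in>UNIV. opnorm (h l)) = opnorm A ^ (n - m)"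
    proof -
      have "(\<Prod>l\<in>UNIV. opnorm (h l)) = (\<Prod>l\<in>UNIV. if c l < m then 1 else opnorm A)"
        using Xf \<open>B (\<lambda>_. 0) = A\<close> by (intro prod.cong) (auto simp: h_def)
      also have "\<dots> = (\<Prod>l\<in>UNIV. if \<not> c l < m then opnorm A else 1)"
        by (intro prod.cong) auto
      also have "\<dots> = (\<Prod>l\<in>{l\<in>UNIV. \<not> c l < m}. opnorm A)"
        by (rule prod.inter_filter[symmetric]) simp
      also have "\<dots> = opnorm A ^ card {l. \<not> c l < m}"
        by simp
      also have "card {l. \<not> c l < m} = n - m"
        using card_ge[OF bb mn] unfolding c_def n_def by (simp add: not_less)
      finally show ?thesis .
    qed
    ultimately have "norm (Dper m A Xf) = norm (Tm h) / fact (n - m)"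
      by (simp add: norm_divide)
    also have "\<dots> \<le> fact n * opnorm A ^ (n - m) / fact (n - m)"
      using Tm_bound[of h] \<open>(\<Prod>l\<in>UNIV. opnorm (h l)) = opnorm A ^ (n - m)\<close>
      by (intro divide_right_mono) (auto simp: n_def)
    finally show ?thesis by simp
  qed
  have ne: "{norm (Dper m A Xf) | Xf. \<forall>k\<in>{1..m}. opnorm (Xf k) = 1} \<noteq> {}"
  proof -
    have "norm (Dper m A (\<lambda>_. mat 1)) \<in> {norm (Dper m A Xf) | Xf. \<forall>k\<in>{1..m}. opnorm (Xf k) = 1}"
      using opnorm_one by auto
    then show ?thesis by auto
  qed
  show ?thesis
    unfolding Dper_norm_def n_def[symmetric]
  proof (rule cSup_least[OF ne])
    fix x assume "x \<in> {norm (Dper m A Xf) | Xf. \<forall>k\<in>{1..m}. opnorm (Xf k) = 1}"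
    then obtain Xf where "x = norm (Dper m A Xf)" "\<forall>k\<in>{1..m}. opnorm (Xf k) = 1" by blast
    then show "x \<le> fact n / fact (n - m) * opnorm A ^ (n - m)" using bound by simp
  qed
qed

theorem corollary3p6:
  fixes A X :: "complex^'n^'n" and m :: nat
  assumes "1 \<le> m" and "m \<le> CARD('n)"
  shows "Dper_norm m A \<le> fact CARD('n) / fact (CARD('n) - m) * opnorm A ^ (CARD('n) - m)
     \<and> norm (per (A + X) - per A) \<le> (opnorm A + opnorm X) ^ CARD('n) - opnorm A ^ CARD('n)"
  using part1[OF assms] part2[of A X] by simp

end
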